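(* Let $(X,d,W)$ be a $W$-hyperbolic space. The following are equivalent: (1) there exists $\eta:(0,\infty)\times(0,2]\to(0,1]$ such that for all $r>0$, $\varepsilon\in(0,2]$ and $a,x,y\in X$: if $d(x,a)\le r$, $d(y,a)\le r$ and $d(x,y)\ge\varepsilon r$, then $d\big(\tfrac12x\oplus\tfrac12y,a\big)\le(1-\eta(r,\varepsilon))r$; (2) there exists $\eta:\mathbb Q^+_*\times\mathbb N\to\mathbb N$ such that for all $r\in\mathbb Q^+_*$, $k\in\mathbb N$ and $a,x,y\in X$: if $d(x,a)<r$, $d(y,a)<r$ and $d\big(\tfrac12x\oplus\tfrac12y,a\big)>\big(1-2^{-\eta(r,k)}\big)r$, then $d(x,y)\le 2^{-k}r$.
   Context: A $W$-hyperbolic space is $(X,d,W)$ with $(X,d)$ a metric space and $W:X\times X\times[0,1]\to X$ such that for all $x,y,z,w\in X$, $\lambda,\lambda_1,\lambda_2\in[0,1]$: (W1) $d(z,W(x,y,\lambda))\le(1-\lambda)d(z,x)+\lambda d(z,y)$; (W2) $d(W(x,y,\lambda_1),W(x,y,\lambda_2))=|\lambda_1-\lambda_2|d(x,y)$; (W3) $W(x,y,\lambda)=W(y,x,1-\lambda)$; (W4) $d(W(x,z,\lambda),W(y,w,\lambda))\le(1-\lambda)d(x,y)+\lambda d(z,w)$. Notation: $(1-\lambda)x\oplus\lambda y:=W(x,y,\lambda)$. $\mathbb Q^+_*$ denotes the set of positive rational numbers. *)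

theory Defs
  imports "HOL-Analysis.Analysis"
begin

definition W_hyperbolic :: "('a::metric_space \<Rightarrow> 'a \<Rightarrow> real \<Rightarrow> 'a) \<Rightarrow> bool" where
  "W_hyperbolic W \<longleftrightarrow>
     (\<forall>x y z w l l1 l2.
        (0 \<le> l \<and> l \<le> 1 \<longrightarrow> dist z (W x y l) \<le> (1 - l) * dist z x + l * dist z y) \<and>
        (0 \<le> l1 \<and> l1 \<le> 1 \<and> 0 \<le> l2 \<and> l2 \<le> 1 \<longrightarrow>
            dist (W x y l1) (W x y l2) = \<bar>l1 - l2\<bar> * dist x y) \<and>
        (0 \<le> l \<and> l \<le> 1 \<longrightarrow> W x y l = W y x (1 - l)) \<and>
        (0 \<le> l \<and> l \<le> 1 \<longrightarrow> dist (W x z l) (W y w l) \<le> (1 - l) * dist x y + l * dist z w))"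

end

theory Submission
  imports Defs
begin

lemma Wh_W1: "W_hyperbolic W \<Longrightarrow> 0 \<le> l \<Longrightarrow> l \<le> 1 \<Longrightarrow> dist z (W x y l) \<le> (1 - l) * dist z x + l * dist z y"
  unfolding W_hyperbolic_def by blast
lemma Wh_W2: "W_hyperbolic W \<Longrightarrow> 0 \<le> l1 \<Longrightarrow> l1 \<le> 1 \<Longrightarrow> 0 \<le> l2 \<Longrightarrow> l2 \<le> 1 \<Longrightarrow>
   dist (W x y l1) (W x y l2) = \<bar>l1 - l2\<bar> * dist x y"
  unfolding W_hyperbolic_def by blast
lemma Wh_W4: "W_hyperbolic W \<Longrightarrow> 0 \<le> l \<Longrightarrow> l \<le> 1 \<Longrightarrow> dist (W x z l) (W y w l) \<le> (1 - l) * dist x y + l * dist z w"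
  unfolding W_hyperbolic_def by blast

lemma Wh_0: "W_hyperbolic W \<Longrightarrow> W a x 0 = a"
  using Wh_W1[of W 0 a a x] by simp
lemma Wh_1: "W_hyperbolic W \<Longrightarrow> W a x 1 = x"
  using Wh_W1[of W 1 x a x] by simp

lemma Wh_da: "W_hyperbolic W \<Longrightarrow> 0 \<le> l \<Longrightarrow> l \<le> 1 \<Longrightarrow> dist (W a x l) a = l * dist a x"
  using Wh_W2[of W l 0 a x] Wh_0[of W a x] by simp
lemma Wh_dx: "W_hyperbolic W \<Longrightarrow> 0 \<le> l \<Longrightarrow> l \<le> 1 \<Longrightarrow> dist (W a x l) x = (1 - l) * dist a x"
  using Wh_W2[of W l 1 a x] Wh_1[of W a x] by simp

theorem proposition3p8:
  fixes W :: "'a::metric_space \<Rightarrow> 'a \<Rightarrow> real \<Rightarrow> 'a"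
  assumes "W_hyperbolic W"
  shows "(\<exists>\<eta> :: real \<Rightarrow> real \<Rightarrow> real.
            (\<forall>r \<epsilon>. r > 0 \<and> 0 < \<epsilon> \<and> \<epsilon> \<le> 2 \<longrightarrow> 0 < \<eta> r \<epsilon> \<and> \<eta> r \<epsilon> \<le> 1) \<and>
            (\<forall>r \<epsilon> a x y. r > 0 \<and> 0 < \<epsilon> \<and> \<epsilon> \<le> 2 \<and>
               dist x a \<le> r \<and> dist y a \<le> r \<and> dist x y \<ge> \<epsilon> * r \<longrightarrow>
               dist (W x y (1/2)) a \<le> (1 - \<eta> r \<epsilon>) * r))
     \<longleftrightarrow>
         (\<exists>\<eta> :: rat \<Rightarrow> nat \<Rightarrow> nat.
            \<forall>r k a x y. r > 0 \<and>
               dist x a < real_of_rat r \<and> dist y a < real_of_rat r \<and>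
               dist (W x y (1/2)) a > (1 - (1/2) ^ \<eta> r k) * real_of_rat r \<longrightarrow>
               dist x y \<le> (1/2) ^ k * real_of_rat r)"
proof
  assume "\<exists>\<eta> :: real \<Rightarrow> real \<Rightarrow> real.
            (\<forall>r \<epsilon>. r > 0 \<and> 0 < \<epsilon> \<and> \<epsilon> \<le> 2 \<longrightarrow> 0 < \<eta> r \<epsilon> \<and> \<eta> r \<epsilon> \<le> 1) \<and>
            (\<forall>r \<epsilon> a x y. r > 0 \<and> 0 < \<epsilon> \<and> \<epsilon> \<le> 2 \<and>
               dist x a \<le> r \<and> dist y a \<le> r \<and> dist x y \<ge> \<epsilon> * r \<longrightarrow>
               dist (W x y (1/2)) a \<le> (1 - \<eta> r \<epsilon>) * r)"
  then obtain \<eta> :: "real \<Rightarrow> real \<Rightarrow> real" where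
    e1: "\<And>r \<epsilon>. r > 0 \<Longrightarrow> 0 < \<epsilon> \<Longrightarrow> \<epsilon> \<le> 2 \<Longrightarrow> 0 < \<eta> r \<epsilon>" and
    e2: "\<And>r \<epsilon> a x y. r > 0 \<Longrightarrow> 0 < \<epsilon> \<Longrightarrow> \<epsilon> \<le> 2 \<Longrightarrow>
               dist x a \<le> r \<Longrightarrow> dist y a \<le> r \<Longrightarrow> dist x y \<ge> \<epsilon> * r \<Longrightarrow>
               dist (W x y (1/2)) a \<le> (1 - \<eta> r \<epsilon>) * r" by blast
  define N where "N = (\<lambda>(r::rat) (k::nat). SOME n::nat. (1/2::real)^n < \<eta> (real_of_rat r) ((1/2)^k))"
  show "\<exists>\<eta> :: rat \<Rightarrow> nat \<Rightarrow> nat.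
            \<forall>r k a x y. r > 0 \<and>
               dist x a < real_of_rat r \<and> dist y a < real_of_rat r \<and>
               dist (W x y (1/2)) a > (1 - (1/2) ^ \<eta> r k) * real_of_rat r \<longrightarrow>
               dist x y \<le> (1/2) ^ k * real_of_rat r"
  proof (rule exI[of _ N], intro allI impI)
    fix r :: rat and k a x y
    assume h: "r > 0 \<and> dist x a < real_of_rat r \<and> dist y a < real_of_rat r \<and>
               dist (W x y (1/2)) a > (1 - (1/2) ^ N r k) * real_of_rat r"
    have rp: "real_of_rat r > 0" using h by simp
    have ep: "(0::real) < (1/2)^k" by simp
    have ep2: "(1/2::real)^k \<le> 2"
      by (rule order_trans[of _ 1]) (simp_all add: power_le_one)
    have pos: "0 < \<eta> (real_of_rat r) ((1/2)^k)" using e1[OF rp ep ep2] .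
    have ex: "\<exists>n::nat. (1/2::real)^n < \<eta> (real_of_rat r) ((1/2)^k)"
      using real_arch_pow_inv[OF pos, of "1/2"] by simp
    have NN: "N r k = (SOME n::nat. (1/2::real)^n < \<eta> (real_of_rat r) ((1/2)^k))"
      unfolding N_def by simp
    have nN: "(1/2::real)^N r k < \<eta> (real_of_rat r) ((1/2)^k)"
      unfolding NN by (rule someI_ex[OF ex])
    show "dist x y \<le> (1/2) ^ k * real_of_rat r"
    proof (rule ccontr)
      assume "\<not> ?thesis"
      hence "dist x y \<ge> (1/2)^k * real_of_rat r" by simp
      from e2[OF rp ep ep2 _ _ this] h
      have "dist (W x y (1/2)) a \<le> (1 - \<eta> (real_of_rat r) ((1/2)^k)) * real_of_rat r" by simp
      moreover have "(1 - \<eta> (real_of_rat r) ((1/2)^k)) * real_of_rat r \<le> (1 - (1/2) ^ N r k) * real_of_rat r"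
        using nN rp by (intro mult_right_mono) simp_all
      ultimately show False using h by simp
    qed
  qed
next
  assume "\<exists>\<eta> :: rat \<Rightarrow> nat \<Rightarrow> nat.
            \<forall>r k a x y. r > 0 \<and>
               dist x a < real_of_rat r \<and> dist y a < real_of_rat r \<and>
               dist (W x y (1/2)) a > (1 - (1/2) ^ \<eta> r k) * real_of_rat r \<longrightarrow>
               dist x y \<le> (1/2) ^ k * real_of_rat r"
  then obtain \<eta>2 :: "rat \<Rightarrow> nat \<Rightarrow> nat" where
    h2: "\<And>r k a x y. r > 0 \<Longrightarrow>
               dist x a < real_of_rat r \<Longrightarrow> dist y a < real_of_rat r \<Longrightarrow>
               dist x y > (1/2) ^ k * real_of_rat r \<Longrightarrow>
               dist (W x y (1/2)) a \<le> (1 - (1/2) ^ \<eta>2 r k) * real_of_rat r"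
    by (meson not_le)
  define Q where "Q = (\<lambda>(r::real) (\<epsilon>::real). SOME q::rat. r * (1 - \<epsilon>/8) < real_of_rat q \<and> real_of_rat q < r)"
  define K where "K = (\<lambda>\<epsilon>::real. SOME k::nat. (1/2::real)^k < \<epsilon>/2)"
  define E where "E = (\<lambda>r \<epsilon>. (1/2::real) ^ \<eta>2 (Q r \<epsilon>) (K \<epsilon>) * real_of_rat (Q r \<epsilon>) * (1 - \<epsilon>/8) / r)"
  have Qp: "r * (1 - \<epsilon>/8) < real_of_rat (Q r \<epsilon>) \<and> real_of_rat (Q r \<epsilon>) < r"
    if "r > 0" "0 < \<epsilon>" for r \<epsilon> :: real
  proof -
    have "r * (1 - \<epsilon>/8) < r" using that by simp
    then obtain t where "t \<in> \<rat>" "r * (1 - \<epsilon>/8) < t" "t < r" using Rats_dense_in_real by blast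
    then obtain q where "t = real_of_rat q" by (auto elim: Rats_cases)
    hence "\<exists>q::rat. r * (1 - \<epsilon>/8) < real_of_rat q \<and> real_of_rat q < r"
      using \<open>r * (1 - \<epsilon>/8) < t\<close> \<open>t < r\<close> by blast
    thus ?thesis unfolding Q_def by (rule someI_ex)
  qed
  have Kp: "(1/2::real)^K \<epsilon> < \<epsilon>/2" if "0 < \<epsilon>" for \<epsilon> :: real
  proof -
    have "\<exists>k::nat. (1/2::real)^k < \<epsilon>/2" using real_arch_pow_inv[of "\<epsilon>/2" "1/2"] that by simp
    thus ?thesis unfolding K_def by (rule someI_ex)
  qed
  show "\<exists>\<eta> :: real \<Rightarrow> real \<Rightarrow> real.
            (\<forall>r \<epsilon>. r > 0 \<and> 0 < \<epsilon> \<and> \<epsilon> \<le> 2 \<longrightarrow> 0 < \<eta> r \<epsilon> \<and> \<eta> r \<epsilon> \<le> 1) \<and>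
            (\<forall>r \<epsilon> a x y. r > 0 \<and> 0 < \<epsilon> \<and> \<epsilon> \<le> 2 \<and>
               dist x a \<le> r \<and> dist y a \<le> r \<and> dist x y \<ge> \<epsilon> * r \<longrightarrow>
               dist (W x y (1/2)) a \<le> (1 - \<eta> r \<epsilon>) * r)"
  proof (rule exI[of _ E], intro conjI allI impI)
    fix r \<epsilon> :: real
    assume h: "r > 0 \<and> 0 < \<epsilon> \<and> \<epsilon> \<le> 2"
    define q where "q = real_of_rat (Q r \<epsilon>)"
    define p where "p = (1/2::real) ^ \<eta>2 (Q r \<epsilon>) (K \<epsilon>)"
    have q: "r * (1 - \<epsilon>/8) < q" "q < r" using Qp[of r \<epsilon>] h unfolding q_def by auto
    have "0 < r * (1 - \<epsilon>/8)" using h by simp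
    hence qp: "q > 0" using q by linarith
    have p: "0 < p" "p \<le> 1" unfolding p_def by (simp_all add: power_le_one)
    have E: "E r \<epsilon> = p * q * (1 - \<epsilon>/8) / r" unfolding E_def p_def q_def by simp
    have "0 < p * q * (1 - \<epsilon>/8)" using p qp h by simp
    thus "0 < E r \<epsilon>" using h E by simp
    have "p * q * (1 - \<epsilon>/8) \<le> 1 * r * 1"
      using p qp q h by (intro mult_mono) auto
    thus "E r \<epsilon> \<le> 1" using h E by simp
  next
    fix r \<epsilon> :: real and a x y :: 'a
    assume h: "r > 0 \<and> 0 < \<epsilon> \<and> \<epsilon> \<le> 2 \<and>
               dist x a \<le> r \<and> dist y a \<le> r \<and> dist x y \<ge> \<epsilon> * r"
    define q where "q = real_of_rat (Q r \<epsilon>)"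
    define n where "n = \<eta>2 (Q r \<epsilon>) (K \<epsilon>)"
    define p where "p = (1/2::real) ^ n"
    define c where "c = \<epsilon> / 8"
    have q: "r * (1 - c) < q" "q < r" using Qp[of r \<epsilon>] h unfolding q_def c_def by auto
    have "0 < r * (1 - c)" using h unfolding c_def by simp
    hence qp: "q > 0" using q by linarith
    have Qpos: "Q r \<epsilon> > 0" using qp unfolding q_def by simp
    have p: "0 < p" "p \<le> 1" unfolding p_def by (simp_all add: power_le_one)
    have E: "E r \<epsilon> = p * q * (1 - c) / r" unfolding E_def p_def q_def n_def c_def by simp
    have k: "(1/2::real)^K \<epsilon> < \<epsilon>/2" using Kp h by simp
    define t where "t = q - p * c * q"
    define l where "l = t / r"
    have c: "0 < c" "c \<le> 1/4" using h unfolding c_def by auto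
    have pcq: "0 < p * c * q" using p c qp by simp
    have pcq2: "p * c * q \<le> c * q" using p c qp by (simp add: mult_right_le_one_le)
    have tq: "t < q" using pcq unfolding t_def by simp
    have "c * q \<le> 1/4 * q" using c qp by (intro mult_right_mono) auto
    hence tp: "0 < t" using pcq2 qp unfolding t_def by linarith
    have l0: "0 \<le> l" "l \<le> 1" using tp tq q h unfolding l_def by auto
    have lr: "l * r = t" unfolding l_def using h by simp
    define x' where "x' = W a x l"
    define y' where "y' = W a y l"
    have dx'a: "dist x' a = l * dist a x" unfolding x'_def using Wh_da[OF assms l0] .
    have dy'a: "dist y' a = l * dist a y" unfolding y'_def using Wh_da[OF assms l0] .
    have dx'x: "dist x' x = (1 - l) * dist a x" unfolding x'_def using Wh_dx[OF assms l0] .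
    have dy'y: "dist y' y = (1 - l) * dist a y" unfolding y'_def using Wh_dx[OF assms l0] .
    have daxr: "dist a x \<le> r" "dist a y \<le> r" using h by (simp_all add: dist_commute)
    have "l * dist a x \<le> l * r" using l0 daxr by (simp add: mult_left_mono)
    hence x'a: "dist x' a < q" using dx'a lr tq by simp
    have "l * dist a y \<le> l * r" using l0 daxr by (simp add: mult_left_mono)
    hence y'a: "dist y' a < q" using dy'a lr tq by simp
    have "(1 - l) * dist a x \<le> (1 - l) * r" using l0 daxr by (simp add: mult_left_mono)
    hence ex: "dist x' x \<le> r - t" using dx'x lr by (simp add: algebra_simps)
    have "(1 - l) * dist a y \<le> (1 - l) * r" using l0 daxr by (simp add: mult_left_mono)
    hence ey: "dist y' y \<le> r - t" using dy'y lr by (simp add: algebra_simps)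
    have rt: "r - t \<le> c * r + c * q"
      using q pcq2 unfolding t_def by (simp add: algebra_simps)
    have "dist x y \<le> dist x x' + dist x' y" by (rule dist_triangle)
    moreover have "dist x' y \<le> dist x' y' + dist y' y" by (rule dist_triangle)
    ultimately have "dist x y \<le> dist x x' + dist x' y' + dist y' y" by linarith
    hence dxy': "dist x' y' \<ge> \<epsilon> * r - 2 * (r - t)" using h ex ey by (simp add: dist_commute)
    have "\<epsilon> * r - 2 * (r - t) \<ge> \<epsilon> * r - 2 * (c * r + c * q)" using rt by simp
    moreover have "c * q < c * r" using c q by simp
    ultimately have "dist x' y' > \<epsilon> * r - 4 * c * r" using dxy' by simp
    hence big: "dist x' y' > \<epsilon> / 2 * r" unfolding c_def by simp
    have "(1/2::real)^K \<epsilon> * q \<le> \<epsilon> / 2 * r"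
      using k qp q h by (intro mult_mono) auto
    hence "dist x' y' > (1/2)^K \<epsilon> * real_of_rat (Q r \<epsilon>)" using big q_def by simp
    from h2[OF Qpos _ _ this] x'a y'a
    have m': "dist (W x' y' (1/2)) a \<le> (1 - p) * q" unfolding p_def n_def q_def by simp
    have mm: "dist (W x' y' (1/2)) (W x y (1/2)) \<le> (1 - 1/2) * dist x' x + 1/2 * dist y' y"
      using Wh_W4[OF assms, of "1/2" x' y' x y] by simp
    hence mm2: "dist (W x y (1/2)) (W x' y' (1/2)) \<le> r - t" using ex ey by (simp add: dist_commute)
    have "dist (W x y (1/2)) a \<le> dist (W x y (1/2)) (W x' y' (1/2)) + dist (W x' y' (1/2)) a"
      by (rule dist_triangle)
    also have "\<dots> \<le> r - t + (1 - p) * q" using mm2 m' by simp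
    also have "\<dots> = r - p * q * (1 - c)" unfolding t_def by (simp add: algebra_simps)
    also have "\<dots> = (1 - E r \<epsilon>) * r" unfolding E using h by (simp add: field_simps)
    finally show "dist (W x y (1/2)) a \<le> (1 - E r \<epsilon>) * r" .
  qed
qed

end
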